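(* Let $\Upsilon$ be a $\delta$--hyperbolic geodesic metric space and let $m,\epsilon>0$ and $c\ge 0$ be real numbers. There exists a constant $\epsilon'$ such that for any finite or countably infinite collection of subsets $\{X_i\}_{i=1}^{\Lambda}$ of $\Upsilon$ satisfying (1) each $X_i$ is $\epsilon$--quasi-convex; (2) $X_i\cap X_{i+1}\neq\emptyset$ for each $i$; (3) for all $i,j$ and all $x\in X_i$, $y\in X_j$, $d(x,y)\ge m(|i-j|-c)$, the union $\bigcup_i X_i$ is $\epsilon'$--quasi-convex.
   Context: $\delta$--hyperbolic means geodesic triangles are $\delta$--slim. A subset $Z$ is $\epsilon$--quasi-convex if every geodesic joining two points of $Z$ lies in the $\epsilon$--neighborhood of $Z$. The constant $\epsilon'$ depends only on $\delta,m,\epsilon,c$, not on the collection. *)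

theory Defs
  imports "HOL-Analysis.Analysis"
begin

definition geodesic_segment_between :: "'a::metric_space set \<Rightarrow> 'a \<Rightarrow> 'a \<Rightarrow> bool" where
  "geodesic_segment_between G x y \<longleftrightarrow>
     (\<exists>\<gamma>::real \<Rightarrow> 'a. \<gamma> 0 = x \<and> \<gamma> (dist x y) = y
        \<and> (\<forall>s\<in>{0..dist x y}. \<forall>t\<in>{0..dist x y}. dist (\<gamma> s) (\<gamma> t) = \<bar>s - t\<bar>)
        \<and> G = \<gamma> ` {0..dist x y})"

definition geodesic_space :: "'a::metric_space itself \<Rightarrow> bool" where
  "geodesic_space _ \<longleftrightarrow> (\<forall>x y::'a. \<exists>G. geodesic_segment_between G x y)"

definition nbhd :: "real \<Rightarrow> 'a::metric_space set \<Rightarrow> 'a set" where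
  "nbhd r A = {p. \<exists>q\<in>A. dist p q \<le> r}"

definition hyperbolic :: "real \<Rightarrow> 'a::metric_space itself \<Rightarrow> bool" where
  "hyperbolic \<delta> _ \<longleftrightarrow> (\<forall>x y z::'a. \<forall>Gxy Gyz Gxz.
      geodesic_segment_between Gxy x y \<and> geodesic_segment_between Gyz y z
      \<and> geodesic_segment_between Gxz x z \<longrightarrow> Gxy \<subseteq> nbhd \<delta> (Gyz \<union> Gxz))"

definition quasi_convex :: "real \<Rightarrow> 'a::metric_space set \<Rightarrow> bool" where
  "quasi_convex \<epsilon> Z \<longleftrightarrow> (\<forall>x\<in>Z. \<forall>y\<in>Z. \<forall>G. geodesic_segment_between G x y \<longrightarrow> G \<subseteq> nbhd \<epsilon> Z)"

end

theory Submission
  imports Defs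
begin


lemma gsb_rev:
  assumes "geodesic_segment_between G x y"
  shows "geodesic_segment_between G y x"
proof -
  define d where "d = dist x y"
  from assms obtain \<gamma> where g: "\<gamma> 0 = x" "\<gamma> d = y"
    "\<forall>s\<in>{0..d}. \<forall>t\<in>{0..d}. dist (\<gamma> s) (\<gamma> t) = \<bar>s - t\<bar>" "G = \<gamma> ` {0..d}"
    unfolding geodesic_segment_between_def d_def by blast
  define \<gamma>' where "\<gamma>' = (\<lambda>s. \<gamma> (d - s))"
  have im: "(\<lambda>s. d - s) ` {0..d} = {0..d}"
  proof (rule set_eqI)
    fix t
    show "t \<in> (\<lambda>s. d - s) ` {0..d} \<longleftrightarrow> t \<in> {0..d}"
    proof
      assume "t \<in> (\<lambda>s. d - s) ` {0..d}" then show "t \<in> {0..d}" by auto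
    next
      assume "t \<in> {0..d}"
      then have "d - t \<in> {0..d}" "t = d - (d - t)" by auto
      then show "t \<in> (\<lambda>s. d - s) ` {0..d}" by blast
    qed
  qed
  have "\<gamma>' ` {0..d} = \<gamma> ` ((\<lambda>s. d - s) ` {0..d})"
    unfolding \<gamma>'_def image_image by (rule refl)
  also have "\<dots> = G" unfolding im g(4) by (rule refl)
  finally have G: "G = \<gamma>' ` {0..d}" by simp
  have "\<forall>s\<in>{0..d}. \<forall>t\<in>{0..d}. dist (\<gamma>' s) (\<gamma>' t) = \<bar>s - t\<bar>"
  proof (intro ballI)
    fix s t assume "s \<in> {0..d}" "t \<in> {0..d}"
    then have "d - s \<in> {0..d}" "d - t \<in> {0..d}" by auto
    then have "dist (\<gamma> (d - s)) (\<gamma> (d - t)) = \<bar>(d - s) - (d - t)\<bar>" using g(3) by blast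
    then show "dist (\<gamma>' s) (\<gamma>' t) = \<bar>s - t\<bar>" by (simp add: \<gamma>'_def abs_minus_commute)
  qed
  moreover have "\<gamma>' 0 = y" "\<gamma>' d = x" using g by (auto simp: \<gamma>'_def)
  moreover have "dist y x = d" by (simp add: d_def dist_commute)
  ultimately show ?thesis unfolding geodesic_segment_between_def using G by metis
qed

lemma gsb_start:
  assumes "geodesic_segment_between G x y" shows "x \<in> G"
  using assms unfolding geodesic_segment_between_def by force

lemma gsb_same:
  assumes "geodesic_segment_between G y y" "q \<in> G" shows "q = y"
  using assms unfolding geodesic_segment_between_def by force

definition seg :: "'a::metric_space \<Rightarrow> 'a \<Rightarrow> 'a set" where
  "seg x y = (SOME G. geodesic_segment_between G x y)"

lemma exists_L:
  fixes m A B c :: real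
  assumes "m > 0"
  shows "\<exists>L::nat. m * (2^L - c) > A + B * L"
proof -
  define R where "R = (\<bar>A\<bar> + \<bar>B\<bar> + m * \<bar>c\<bar>) / m"
  define L where "L = max 4 (nat \<lceil>R\<rceil> + 1)"
  have L4: "L \<ge> 4" by (simp add: L_def)
  have LR: "real L > R" unfolding L_def by linarith
  have sq: "L * L \<le> (2::nat)^L" using L4
  proof (induction L rule: dec_induct)
    case base then show ?case by simp
  next
    case (step n)
    have "Suc n * Suc n = n * n + 2 * n + 1" by simp
    also have "\<dots> \<le> 2 * (n * n)"
    proof -
      have "4 * n \<le> n * n" using step(1) by (intro mult_le_mono1) simp
      then show ?thesis using step(1) by linarith
    qed
    also have "\<dots> \<le> 2 * 2^n" using step(3) by simp
    finally show ?case by simp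
  qed
  then have sqr: "real L * real L \<le> 2^L"
    by (metis of_nat_le_iff of_nat_mult of_nat_numeral of_nat_power)
  have "m * R = \<bar>A\<bar> + \<bar>B\<bar> + m * \<bar>c\<bar>" using assms by (simp add: R_def)
  have "m * real L > \<bar>A\<bar> + \<bar>B\<bar> + m * \<bar>c\<bar>"
    using LR assms \<open>m * R = _\<close> by (metis mult_strict_left_mono)
  then have "m * real L * real L > (\<bar>A\<bar> + \<bar>B\<bar> + m * \<bar>c\<bar>) * real L"
    using L4 by (intro mult_strict_right_mono) auto
  moreover have "(\<bar>A\<bar> + \<bar>B\<bar> + m * \<bar>c\<bar>) * real L \<ge> A + B * L + m * c"
  proof -
    have "real L \<ge> 1" using L4 by simp
    have a1: "\<bar>A\<bar> * real L \<ge> A"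
    proof -
      have "\<bar>A\<bar> * real L \<ge> \<bar>A\<bar> * 1" using \<open>real L \<ge> 1\<close> by (intro mult_left_mono) auto
      then show ?thesis by simp
    qed
    have a2: "m * \<bar>c\<bar> * real L \<ge> m * c"
    proof -
      have "m * \<bar>c\<bar> * real L \<ge> m * \<bar>c\<bar> * 1" using \<open>real L \<ge> 1\<close> assms by (intro mult_left_mono) auto
      moreover have "m * \<bar>c\<bar> \<ge> m * c" using assms by (intro mult_left_mono) auto
      ultimately show ?thesis by simp
    qed
    have a3: "\<bar>B\<bar> * real L \<ge> B * L" by (intro mult_right_mono) auto
    note a1 a2 a3
    then show ?thesis by (simp add: algebra_simps)
  qed
  moreover have "m * (2^L) \<ge> m * (real L * real L)" using sqr assms by simp
  ultimately show ?thesis by (intro exI[of _ L]) (simp add: algebra_simps)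
qed



locale chainsetup =
  fixes \<delta> \<epsilon> m c :: real and I :: "nat set" and X :: "nat \<Rightarrow> 'a::metric_space set"
  assumes geo: "geodesic_space TYPE('a)" and hyp: "hyperbolic \<delta> TYPE('a)"
    and mpos: "m > 0" and epos: "\<epsilon> > 0" and cnn: "c \<ge> 0"
    and IV: "\<And>i j k. i \<in> I \<Longrightarrow> k \<in> I \<Longrightarrow> i \<le> j \<Longrightarrow> j \<le> k \<Longrightarrow> j \<in> I"
    and QC: "\<And>i. i \<in> I \<Longrightarrow> quasi_convex \<epsilon> (X i)"
    and CH: "\<And>i. i \<in> I \<Longrightarrow> i + 1 \<in> I \<Longrightarrow> X i \<inter> X (i + 1) \<noteq> {}"
    and SEP: "\<And>i j x y. i \<in> I \<Longrightarrow> j \<in> I \<Longrightarrow> x \<in> X i \<Longrightarrow> y \<in> X j \<Longrightarrow>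
                dist x y \<ge> m * (\<bar>real i - real j\<bar> - c)"
begin

lemma seg_gsb: "geodesic_segment_between (seg x y) x (y::'a)"
proof -
  have "\<exists>G. geodesic_segment_between G x y" using geo unfolding geodesic_space_def by blast
  then show ?thesis unfolding seg_def by (rule someI_ex)
qed

lemma tri:
  assumes "geodesic_segment_between G x y" "geodesic_segment_between H1 x w"
    "geodesic_segment_between H2 w (y::'a)" "z \<in> G"
  shows "\<exists>q \<in> H1 \<union> H2. dist z q \<le> \<delta>"
proof -
  have "G \<subseteq> nbhd \<delta> (H2 \<union> H1)"
    using hyp assms(1,2) gsb_rev[OF assms(3)] unfolding hyperbolic_def by blast
  then show ?thesis using assms(4) unfolding nbhd_def by blast
qed

lemma delta_nonneg: "\<delta> \<ge> 0"
proof -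
  obtain x :: 'a where True by blast
  have g: "geodesic_segment_between (seg x x) x x" by (rule seg_gsb)
  from tri[OF g g g gsb_start[OF g]] obtain q where "dist x q \<le> \<delta>" by blast
  then show ?thesis using zero_le_dist[of x q] by linarith
qed

lemma small:
  assumes "{a..b} \<subseteq> I" "b < a + 2^L" "u \<in> {a..b}" "v \<in> {a..b}" "x \<in> X u" "y \<in> X v"
    "geodesic_segment_between G x y" "z \<in> G"
  shows "\<exists>s\<in>{a..b}. \<exists>q\<in>X s. dist z q \<le> \<epsilon> + real L * \<delta>"
  using assms
proof (induction L arbitrary: a b u v x y G z)
  case 0
  then have ab: "a = b" "u = a" "v = a" by auto
  with 0 have "a \<in> I" by auto
  with 0 ab have "G \<subseteq> nbhd \<epsilon> (X a)" using QC[of a] unfolding quasi_convex_def by auto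
  with \<open>z\<in>G\<close> obtain q where "q \<in> X a" "dist z q \<le> \<epsilon>" unfolding nbhd_def by auto
  then show ?case using ab by auto
next
  case (Suc L)
  have dn: "\<delta> \<ge> 0" by (rule delta_nonneg)
  show ?case
  proof (cases "b < a + 2^L")
    case True
    from Suc.IH[OF Suc.prems(1) True Suc.prems(3-8)] obtain s q
      where sq: "s\<in>{a..b}" "q \<in> X s" "dist z q \<le> \<epsilon> + L*\<delta>" by blast
    moreover have "\<epsilon> + L*\<delta> \<le> \<epsilon> + (Suc L)*\<delta>" using dn by (simp add: algebra_simps)
    ultimately show ?thesis by force
  next
    case False
    define h where "h = a + 2^L - 1"
    have h1: "h + 1 = a + 2^L" unfolding h_def by simp
    have p1: "(2::nat)^L \<ge> 1" by simp
    have hab: "a \<le> h" "h + 1 \<le> b" using False h1 p1 unfolding h_def by linarith+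
    have hI: "h \<in> I" "h+1 \<in> I" using hab Suc.prems(1) by auto
    obtain p where p: "p \<in> X h" "p \<in> X (h+1)" using CH[OF hI] by blast
    have half: "\<exists>s\<in>{a..b}. \<exists>q\<in>X s. dist r q \<le> \<epsilon> + L*\<delta>"
      if uw: "u' \<in> {a..b}" "w \<in> X u'" and H: "geodesic_segment_between H w p \<or> geodesic_segment_between H p w"
        and r: "r \<in> H" for u' w H r
    proof (cases "u' \<le> h")
      case True
      have c1: "{a..h} \<subseteq> I" "h < a + 2^L" "u' \<in> {a..h}" "h \<in> {a..h}"
        using True uw hab Suc.prems(1) h1 by auto
      from H have "\<exists>s\<in>{a..h}. \<exists>q\<in>X s. dist r q \<le> \<epsilon> + L*\<delta>"
      proof
        assume "geodesic_segment_between H w p"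
        from Suc.IH[OF c1(1,2,3,4) uw(2) p(1) this r] show ?thesis .
      next
        assume "geodesic_segment_between H p w"
        from Suc.IH[OF c1(1,2,4,3) p(1) uw(2) this r] show ?thesis .
      qed
      then show ?thesis using hab by force
    next
      case False
      have c1: "{h+1..b} \<subseteq> I" "b < h + 1 + 2^L" "u' \<in> {h+1..b}" "h+1 \<in> {h+1..b}"
        using False uw hab Suc.prems(1,2) h1 by auto
      from H have "\<exists>s\<in>{h+1..b}. \<exists>q\<in>X s. dist r q \<le> \<epsilon> + L*\<delta>"
      proof
        assume "geodesic_segment_between H w p"
        from Suc.IH[OF c1(1,2,3,4) uw(2) p(2) this r] show ?thesis .
      next
        assume "geodesic_segment_between H p w"
        from Suc.IH[OF c1(1,2,4,3) p(2) uw(2) this r] show ?thesis .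
      qed
      then show ?thesis using hab by force
    qed
    from tri[OF Suc.prems(7) seg_gsb[of x p] seg_gsb[of p y] Suc.prems(8)]
    obtain w where w: "w \<in> seg x p \<union> seg p y" "dist z w \<le> \<delta>" by blast
    have "\<exists>s\<in>{a..b}. \<exists>q\<in>X s. dist w q \<le> \<epsilon> + L*\<delta>"
    proof (cases "w \<in> seg x p")
      case True
      then show ?thesis using half[OF Suc.prems(3,5)] seg_gsb[of x p] by blast
    next
      case False
      then have "w \<in> seg p y" using w by blast
      then show ?thesis using half[OF Suc.prems(4,6)] seg_gsb[of p y] by blast
    qed
    then obtain s q where sq: "s\<in>{a..b}" "q\<in>X s" "dist w q \<le> \<epsilon> + L*\<delta>" by blast
    have "dist z q \<le> dist z w + dist w q" by (rule dist_triangle)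
    also have "\<dots> \<le> \<epsilon> + (Suc L)*\<delta>" using w(2) sq(3) by (simp add: algebra_simps)
    finally show ?thesis using sq by blast
  qed
qed

end


context chainsetup begin

lemma main:
  assumes Lcond: "m * (2^L - c) > 2*K + 4*\<delta>" and Kdef: "K = \<epsilon> + real L * \<delta> + 2*\<delta>"
  shows "a \<le> b \<Longrightarrow> a \<in> I \<Longrightarrow> b \<in> I \<Longrightarrow> x \<in> X a \<Longrightarrow> y \<in> X b \<Longrightarrow>
    geodesic_segment_between G x y \<Longrightarrow> z \<in> G \<Longrightarrow> \<exists>s\<in>{a..b}. \<exists>q\<in>X s. dist z q \<le> K"
proof (induction "b - a" arbitrary: a b x y G z rule: less_induct)
  case less
  define N where "N = (2::nat)^L"
  have N1: "N \<ge> 1" by (simp add: N_def)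
  have dn: "\<delta> \<ge> 0" by (rule delta_nonneg)
  have abI: "{a..b} \<subseteq> I"
  proof
    fix j assume "j \<in> {a..b}"
    then show "j \<in> I" using IV[of a b j] less.prems(2,3) by simp
  qed
  have K1: "\<epsilon> + real L * \<delta> + \<delta> \<le> K" "\<epsilon> + real L * \<delta> \<le> K" "\<delta> \<le> K"
    using Kdef dn epos by (auto simp: zero_le_mult_iff)
  have xs: "x \<in> X a" "y \<in> X b" using less.prems by auto
  note G = less.prems(6) and zG = less.prems(7)
  show ?case
  proof (cases "b < a + N")
    case True
    from small[OF abI True[unfolded N_def], of a b x y G z] xs G zG less.prems(1)
    obtain s q where "s\<in>{a..b}" "q\<in>X s" "dist z q \<le> \<epsilon> + real L * \<delta>" by auto
    then show ?thesis using K1 by force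
  next
    case False
    then have bigab: "a + N \<le> b" by simp
    define \<pi> where "\<pi> t = (if t < b then (SOME q. q \<in> X t \<inter> X (t+1)) else y)" for t
    have \<pi>mem: "\<pi> t \<in> X t \<and> (t < b \<longrightarrow> \<pi> t \<in> X (t+1))" if "t \<in> {a..b}" for t
    proof (cases "t < b")
      case True
      then have "t \<in> I" "t + 1 \<in> I" using that abI by auto
      from CH[OF this] have "\<exists>q. q \<in> X t \<inter> X (t+1)" by blast
      then have "(SOME q. q \<in> X t \<inter> X (t+1)) \<in> X t \<inter> X (t+1)" by (rule someI_ex)
      then show ?thesis using True by (simp add: \<pi>_def)
    next
      case False
      then have "t = b" using that by auto
      then show ?thesis using xs by (simp add: \<pi>_def)
    qed
    show ?thesis
    proof (cases "z \<in> nbhd \<delta> (seg x y)")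
      case False
      from tri[OF G seg_gsb[of x y] seg_gsb[of y y] zG] obtain q
        where q: "q \<in> seg x y \<union> seg y y" "dist z q \<le> \<delta>" by blast
      have "q \<notin> seg x y" using False q(2) unfolding nbhd_def by blast
      then have "q = y" using q(1) gsb_same[OF seg_gsb[of y y]] by blast
      then show ?thesis using q(2) K1 xs less.prems(1) by force
    next
      case True
      define T where "T = {t. t \<in> {a..b} \<and> z \<in> nbhd \<delta> (seg x (\<pi> t))}"
      have bT: "b \<in> T" using True less.prems(1) by (simp add: T_def \<pi>_def)
      define ts where "ts = (LEAST t. t \<in> T)"
      have tsT: "ts \<in> T" unfolding ts_def using bT by (rule LeastI)
      have notT: "t \<notin> T" if "t < ts" for t using that unfolding ts_def by (rule not_less_Least)
      from tsT have tsab: "ts \<in> {a..b}" by (simp add: T_def)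
      from tsT obtain a1 where a1: "a1 \<in> seg x (\<pi> ts)" "dist z a1 \<le> \<delta>"
        unfolding T_def nbhd_def by blast
      have pts: "\<pi> ts \<in> X ts" using \<pi>mem[OF tsab] by blast
      show ?thesis
      proof (cases "ts < a + N")
        case True
        have "{a..ts} \<subseteq> I" using abI tsab by auto
        from small[OF this True[unfolded N_def], of a ts x "\<pi> ts" "seg x (\<pi> ts)" a1]
        obtain s q where sq: "s\<in>{a..ts}" "q\<in>X s" "dist a1 q \<le> \<epsilon> + real L * \<delta>"
          using tsab xs pts seg_gsb a1 by auto
        have "dist z q \<le> dist z a1 + dist a1 q" by (rule dist_triangle)
        also have "\<dots> \<le> K" using a1(2) sq(3) K1 by linarith
        finally show ?thesis using sq tsab by force
      next
        case False
        define t0 where "t0 = ts - N"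
        have t0: "a \<le> t0" "t0 < ts" "t0 + N = ts" using False N1 by (auto simp: t0_def)
        have t0ab: "t0 \<in> {a..b}" "t0 < b" using t0 tsab by auto
        have "t0 \<notin> T" using notT t0(2) .
        then have zn: "z \<notin> nbhd \<delta> (seg x (\<pi> t0))" using t0ab by (simp add: T_def)
        define p0 where "p0 = \<pi> t0"
        define p1 where "p1 = \<pi> ts"
        have p0m: "p0 \<in> X t0" "p0 \<in> X (t0+1)" using \<pi>mem[OF t0ab(1)] t0ab(2) by (auto simp: p0_def)
        from tri[OF G seg_gsb[of x p0] seg_gsb[of p0 y] zG] obtain b1
          where b1': "b1 \<in> seg x p0 \<union> seg p0 y" "dist z b1 \<le> \<delta>" by blast
        have "b1 \<notin> seg x p0" using zn b1'(2) unfolding nbhd_def p0_def by blast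
        then have b1: "b1 \<in> seg p0 y" "dist z b1 \<le> \<delta>" using b1' by auto
        from tri[OF seg_gsb[of x p1] seg_gsb[of x p0] seg_gsb[of p0 p1]] a1(1)
        obtain a2 where a2: "a2 \<in> seg x p0 \<union> seg p0 p1" "dist a1 a2 \<le> \<delta>"
          unfolding p1_def by blast
        from tri[OF seg_gsb[of p0 y] seg_gsb[of p0 p1] seg_gsb[of p1 y] b1(1)]
        obtain b2 where b2: "b2 \<in> seg p0 p1 \<union> seg p1 y" "dist b1 b2 \<le> \<delta>" by blast
        have mid: "\<exists>s\<in>{a..b}. \<exists>q\<in>X s. dist z q \<le> K"
          if r: "r \<in> seg p0 p1" "dist z r \<le> 2*\<delta>" for r
        proof -
          have c1: "{t0+1..ts} \<subseteq> I" "ts < t0 + 1 + 2^L" "t0+1 \<in> {t0+1..ts}" "ts \<in> {t0+1..ts}"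
            using abI t0 tsab by (auto simp: N_def)
          from small[OF c1 p0m(2) pts[folded p1_def] seg_gsb r(1)]
          obtain s q where sq: "s\<in>{t0+1..ts}" "q\<in>X s" "dist r q \<le> \<epsilon> + real L * \<delta>" by blast
          have "dist z q \<le> dist z r + dist r q" by (rule dist_triangle)
          also have "\<dots> \<le> K" using r(2) sq(3) Kdef by linarith
          finally show ?thesis using sq t0 tsab by force
        qed
        show ?thesis
        proof (cases "a2 \<in> seg p0 p1")
          case True
          have "dist z a2 \<le> dist z a1 + dist a1 a2" by (rule dist_triangle)
          then show ?thesis using mid[OF True] a1(2) a2(2) by linarith
        next
          case na2: False
          show ?thesis
          proof (cases "b2 \<in> seg p0 p1")
            case True
            have "dist z b2 \<le> dist z b1 + dist b1 b2" by (rule dist_triangle)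
            then show ?thesis using mid[OF True] b1(2) b2(2) by linarith
          next
            case False
            have a2s: "a2 \<in> seg x p0" using na2 a2(1) by blast
            have b2s: "b2 \<in> seg p1 y" using False b2(1) by blast
            have aI: "a \<in> I" "t0 \<in> I" using abI t0ab by auto
            have lt1: "t0 - a < b - a" using t0 tsab by auto
            from less.hyps[of t0 a, OF lt1 t0(1) aI xs(1) p0m(1) seg_gsb a2s]
            obtain s q where sq: "s\<in>{a..t0}" "q\<in>X s" "dist a2 q \<le> K" by blast
            define c2 where "c2 = (if ts < b then ts + 1 else b)"
            have c2: "ts \<le> c2" "c2 \<le> b" "a < c2" "c2 \<in> I" using tsab t0 N1 abI
              by (auto simp: c2_def)
            have p1c: "p1 \<in> X c2" using \<pi>mem[OF tsab] tsab unfolding c2_def p1_def by auto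
            have lt2: "b - c2 < b - a" using c2 by auto
            from less.hyps[of b c2, OF lt2 c2(2) c2(4) less.prems(3) p1c xs(2) seg_gsb b2s]
            obtain s' q' where sq': "s'\<in>{c2..b}" "q'\<in>X s'" "dist b2 q' \<le> K" by blast
            have sI: "s \<in> I" "s' \<in> I" using sq(1) sq'(1) abI t0ab c2 by auto
            have sep: "dist q q' \<ge> m * (\<bar>real s - real s'\<bar> - c)" by (rule SEP[OF sI sq(2) sq'(2)])
            have "real s' - real s \<ge> real N" using sq(1) sq'(1) c2(1) t0(3) by auto
            moreover have "real N = 2^L" by (simp add: N_def)
            ultimately have "\<bar>real s - real s'\<bar> - c \<ge> 2^L - c" by linarith
            then have "m * (\<bar>real s - real s'\<bar> - c) \<ge> m * (2^L - c)"
              using mpos by (intro mult_left_mono) auto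
            moreover have "dist q q' \<le> 2*K + 4*\<delta>"
            proof -
              have t1: "dist q q' \<le> dist q a2 + dist a2 q'" by (rule dist_triangle)
              have t2: "dist a2 q' \<le> dist a2 a1 + dist a1 q'" by (rule dist_triangle)
              have t3: "dist a1 q' \<le> dist a1 z + dist z q'" by (rule dist_triangle)
              have t4: "dist z q' \<le> dist z b1 + dist b1 q'" by (rule dist_triangle)
              have t5: "dist b1 q' \<le> dist b1 b2 + dist b2 q'" by (rule dist_triangle)
              have "dist q a2 = dist a2 q" "dist a2 a1 = dist a1 a2" "dist a1 z = dist z a1"
                by (simp_all add: dist_commute)
              then show ?thesis using t1 t2 t3 t4 t5 sq(3) sq'(3) a1(2) a2(2) b1(2) b2(2) by linarith
            qed
            ultimately have False using sep Lcond by linarith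
            then show ?thesis ..
          qed
        qed
      qed
    qed
  qed
qed

end


theorem theoremA3:
  fixes \<delta> m \<epsilon> c :: real
  assumes "geodesic_space TYPE('a::metric_space)"
    and "hyperbolic \<delta> TYPE('a)"
    and "m > 0" and "\<epsilon> > 0" and "c \<ge> 0"
  shows "\<exists>\<epsilon>'. \<forall>(I::nat set) (X::nat \<Rightarrow> 'a set).
           ((\<exists>\<Lambda>. I = {1..\<Lambda>}) \<or> I = {1..}) \<longrightarrow>
           (\<forall>i\<in>I. quasi_convex \<epsilon> (X i)) \<longrightarrow>
           (\<forall>i. i \<in> I \<and> i + 1 \<in> I \<longrightarrow> X i \<inter> X (i + 1) \<noteq> {}) \<longrightarrow>
           (\<forall>i\<in>I. \<forall>j\<in>I. \<forall>x\<in>X i. \<forall>y\<in>X j.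
               dist x y \<ge> m * (\<bar>real i - real j\<bar> - c)) \<longrightarrow>
           quasi_convex \<epsilon>' (\<Union>i\<in>I. X i)"
proof -
  obtain L :: nat where L: "m * (2^L - c) > (2*\<epsilon> + 8*\<delta>) + (2*\<delta>) * L"
    using exists_L[OF assms(3)] by blast
  define K where "K = \<epsilon> + real L * \<delta> + 2*\<delta>"
  have Lcond: "m * (2^L - c) > 2*K + 4*\<delta>" using L by (simp add: K_def algebra_simps)
  show ?thesis
  proof (intro exI[of _ K] allI impI)
    fix I :: "nat set" and X :: "nat \<Rightarrow> 'a set"
    assume HI: "(\<exists>\<Lambda>. I = {1..\<Lambda>}) \<or> I = {1..}"
      and QC': "\<forall>i\<in>I. quasi_convex \<epsilon> (X i)"
      and CH': "\<forall>i. i \<in> I \<and> i + 1 \<in> I \<longrightarrow> X i \<inter> X (i + 1) \<noteq> {}"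
      and SEP': "\<forall>i\<in>I. \<forall>j\<in>I. \<forall>x\<in>X i. \<forall>y\<in>X j. dist x y \<ge> m * (\<bar>real i - real j\<bar> - c)"
    have IV: "j \<in> I" if "i \<in> I" "k \<in> I" "i \<le> j" "j \<le> k" for i j k
      using HI that by auto
    interpret chainsetup \<delta> \<epsilon> m c I X
      using assms IV QC' CH' SEP' by unfold_locales blast+
    show "quasi_convex K (\<Union>i\<in>I. X i)"
      unfolding quasi_convex_def
    proof (intro ballI allI impI subsetI)
      fix x y G z
      assume x: "x \<in> (\<Union>i\<in>I. X i)" and y: "y \<in> (\<Union>i\<in>I. X i)"
        and G: "geodesic_segment_between G x y" and z: "z \<in> G"
      from x obtain i where i: "i \<in> I" "x \<in> X i" by blast
      from y obtain j where j: "j \<in> I" "y \<in> X j" by blast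
      have "\<exists>s\<in>{min i j..max i j}. \<exists>q\<in>X s. dist z q \<le> K"
      proof (cases "i \<le> j")
        case True
        from main[OF Lcond K_def True i(1) j(1) i(2) j(2) G z] True show ?thesis by simp
      next
        case False
        from main[OF Lcond K_def _ j(1) i(1) j(2) i(2) gsb_rev[OF G] z] False show ?thesis by simp
      qed
      then obtain s q where sq: "s \<in> {min i j..max i j}" "q \<in> X s" "dist z q \<le> K" by blast
      have "s \<in> I" using IV[of "min i j" "max i j" s] sq(1) i(1) j(1)
        by (cases "i \<le> j") (auto simp: min_def max_def)
      then show "z \<in> nbhd K (\<Union>i\<in>I. X i)" unfolding nbhd_def using sq by blast
    qed
  qed
qed

end
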